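(* Let $G$ be a finite $n$-player normal-form game with utilities $u_i(x)>0$ for all pure profiles $x\in S$, let $m_i=|S_i|$, and let $\alpha\ge 1$. Let $p^*$ be a generalized equilibrium with selfishness level $\alpha$, i.e. $p^*_i(x_i)=\Psi^*_i(x_i)^{\alpha}/\sum_{y_i\in S_i}\Psi^*_i(y_i)^{\alpha}$ for all $i$ and $x_i\in S_i$, where $\Psi^*_i(x_i)=u_i(x_i,p^*_{-i})$. Then for every player $i$, \[ 0\le \max_{x_i\in S_i}\Psi^*_i(x_i)-\sum_{x_i\in S_i}\Psi^*_i(x_i)\,p^*_i(x_i) < \frac{m_i-1}{e}\Big(\max_{x_i\in S_i}\Psi^*_i(x_i)\Big)\,\alpha^{-1}. \] In particular, the difference between each player's best-response payoff and his expected payoff at a generalized equilibrium tends to $0$ as $\alpha\to\infty$.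
   Context: A finite $n$-player normal-form game has players $1,\dots,n$, finite action sets $S_i$, $S=S_1\times\cdots\times S_n$, and utilities $u_i:S\to\mathbb{R}$. A mixed strategy profile is $p=(p_1,\dots,p_n)$ with each $p_i$ a probability distribution on $S_i$; $p_{-i}$ is the profile of the other players; $u_i(x_i,p_{-i})=\sum_{x_{-i}}u_i(x_i,x_{-i})\prod_{j\ne i}p_j(x_j)$. Note $\sum_{x_i}\Psi^*_i(x_i)p^*_i(x_i)=u_i(p^* )$, the expected payoff of player $i$. *)

theory Defs
  imports "HOL-Analysis.Analysis"
begin

text \<open>A finite n-player normal-form game: players are 0..n-1, player i has the
finite nonempty action set S i, pure profiles are the elements of
PiE {..<n} S, and u i x is the utility of player i at pure profile x.\<close>

definition is_game :: "nat \<Rightarrow> (nat \<Rightarrow> 'a set) \<Rightarrow> bool" where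
  "is_game n S \<longleftrightarrow> (\<forall>i<n. finite (S i) \<and> S i \<noteq> {})"

definition mixed_profile :: "nat \<Rightarrow> (nat \<Rightarrow> 'a set) \<Rightarrow> (nat \<Rightarrow> 'a \<Rightarrow> real) \<Rightarrow> bool" where
  "mixed_profile n S p \<longleftrightarrow>
     (\<forall>i<n. (\<forall>x\<in>S i. 0 \<le> p i x) \<and> (\<Sum>x\<in>S i. p i x) = 1)"

text \<open>u_i(x_i, p_{-i}): expected payoff of player i playing pure x_i
against the mixed strategies of the others.\<close>
definition payoff_vs :: "nat \<Rightarrow> (nat \<Rightarrow> 'a set) \<Rightarrow> (nat \<Rightarrow> (nat \<Rightarrow> 'a) \<Rightarrow> real)
    \<Rightarrow> (nat \<Rightarrow> 'a \<Rightarrow> real) \<Rightarrow> nat \<Rightarrow> 'a \<Rightarrow> real" where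
  "payoff_vs n S u p i xi =
     (\<Sum>y\<in>PiE ({..<n} - {i}) S. u i (y(i := xi)) * (\<Prod>j\<in>{..<n} - {i}. p j (y j)))"

definition gen_equilibrium :: "nat \<Rightarrow> (nat \<Rightarrow> 'a set) \<Rightarrow> (nat \<Rightarrow> (nat \<Rightarrow> 'a) \<Rightarrow> real)
    \<Rightarrow> real \<Rightarrow> (nat \<Rightarrow> 'a \<Rightarrow> real) \<Rightarrow> bool" where
  "gen_equilibrium n S u \<alpha> p \<longleftrightarrow> mixed_profile n S p \<and>
     (\<forall>i<n. \<forall>xi\<in>S i. p i xi =
        payoff_vs n S u p i xi powr \<alpha> / (\<Sum>yi\<in>S i. payoff_vs n S u p i yi powr \<alpha>))"

end

theory Submission
  imports Defs
begin

lemma key: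
  fixes t a :: real assumes t0: "0 \<le> t" and t1: "t \<le> 1" and a: "0 < a"
  shows "(1 - t) * t powr a < 1 / (exp 1 * a)"
proof -
  consider "t = 0" | "t = 1" | "0 < t \<and> t < 1" using t0 t1 by linarith
  then show ?thesis
  proof cases
    case 1 then show ?thesis using a by simp
  next
    case 2 then show ?thesis using a by simp
  next
    case 3
    then have tp: "0 < t" and tl: "t < 1" by auto
    define s where "s = - ln t"
    have lt: "ln t < t - 1"
      using ln_le_minus_one[OF tp] ln_eq_minus_one[OF tp] tl by fastforce
    have s1: "1 - t < s" using lt s_def by simp
    have tpow: "t powr a = exp (- (a * s))" using tp s_def by (simp add: powr_def)
    have "(1 - t) * t powr a < s * exp (- (a * s))"
      using s1 tpow by (simp add: mult_strict_right_mono)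
    also have "\<dots> \<le> 1 / (exp 1 * a)"
    proof -
      have "a * s \<le> exp (a * s - 1)" using exp_ge_add_one_self[of "a * s - 1"] by simp
      also have "\<dots> = exp (a * s) / exp 1" by (simp add: exp_diff)
      finally have h: "a * s \<le> exp (a * s) / exp 1" .
      have "s * exp (- (a * s)) = (a * s) / (a * exp (a * s))"
        using a by (simp add: exp_minus field_simps)
      also have "\<dots> \<le> (exp (a * s) / exp 1) / (a * exp (a * s))"
        using h a by (intro divide_right_mono) auto
      also have "\<dots> = 1 / (exp 1 * a)" using a by (simp add: field_simps)
      finally show ?thesis .
    qed
    finally show ?thesis .
  qed
qed

lemma PiE_upd_mem:
  assumes "i < n" "xi \<in> S i" "y \<in> PiE ({..<n} - {i}) S"
  shows "y(i := xi) \<in> PiE {..<n} S"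
  using assms unfolding PiE_def Pi_def extensional_def by auto

theorem mainTheorem2:
  fixes n :: nat and S :: "nat \<Rightarrow> 'a set" and u :: "nat \<Rightarrow> (nat \<Rightarrow> 'a) \<Rightarrow> real"
    and p :: "nat \<Rightarrow> 'a \<Rightarrow> real" and \<alpha> :: real
  assumes game: "is_game n S"
    and upos: "\<And>i x. i < n \<Longrightarrow> x \<in> PiE {..<n} S \<Longrightarrow> u i x > 0"
    and two: "\<And>i. i < n \<Longrightarrow> card (S i) \<ge> 2"
    and alpha: "\<alpha> \<ge> 1"
    and eq: "gen_equilibrium n S u \<alpha> p"
  shows "\<forall>i<n.
     0 \<le> (MAX xi\<in>S i. payoff_vs n S u p i xi)
          - (\<Sum>xi\<in>S i. payoff_vs n S u p i xi * p i xi)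
   \<and> (MAX xi\<in>S i. payoff_vs n S u p i xi)
          - (\<Sum>xi\<in>S i. payoff_vs n S u p i xi * p i xi)
     < (real (card (S i)) - 1) / exp 1 * (MAX xi\<in>S i. payoff_vs n S u p i xi) * (1 / \<alpha>)"
proof (intro allI impI)
  fix i assume i: "i < n"
  define \<psi> where "\<psi> = payoff_vs n S u p i"
  have fin: "finite (S i)" and ne: "S i \<noteq> {}" using game i by (auto simp: is_game_def)
  have mp: "mixed_profile n S p" and peq: "\<And>x. x \<in> S i \<Longrightarrow> p i x = \<psi> x powr \<alpha> / (\<Sum>y\<in>S i. \<psi> y powr \<alpha>)"
    using eq i by (auto simp: gen_equilibrium_def \<psi>_def)
  have pnn: "\<And>j x. j < n \<Longrightarrow> x \<in> S j \<Longrightarrow> 0 \<le> p j x" and psum: "(\<Sum>x\<in>S i. p i x) = 1"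
    using mp i by (auto simp: mixed_profile_def)
  have \<psi>nn: "0 \<le> \<psi> x" if x: "x \<in> S i" for x
    unfolding \<psi>_def payoff_vs_def
  proof (rule sum_nonneg)
    fix y assume y: "y \<in> PiE ({..<n} - {i}) S"
    have "0 < u i (y(i := x))" using upos[OF i PiE_upd_mem[OF i x y]] .
    moreover have "0 \<le> (\<Prod>j\<in>{..<n} - {i}. p j (y j))"
      using y by (intro prod_nonneg) (auto intro: pnn simp: PiE_def Pi_def)
    ultimately show "0 \<le> u i (y(i := x)) * (\<Prod>j\<in>{..<n} - {i}. p j (y j))" by simp
  qed
  define D where "D = (\<Sum>y\<in>S i. \<psi> y powr \<alpha>)"
  have Dnn: "0 \<le> D" unfolding D_def by (intro sum_nonneg) simp
  have Dpos: "0 < D"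
  proof (rule ccontr)
    assume "\<not> 0 < D" then have "D = 0" using Dnn by simp
    then have "(\<Sum>x\<in>S i. p i x) = 0" using peq by (simp add: D_def)
    then show False using psum by simp
  qed
  define M where "M = (MAX xi\<in>S i. \<psi> xi)"
  obtain x0 where x0: "x0 \<in> S i" "\<psi> x0 = M"
  proof -
    have "M \<in> \<psi> ` S i" unfolding M_def using fin ne by (intro Max_in) auto
    then show ?thesis using that by auto
  qed
  have leM: "\<And>x. x \<in> S i \<Longrightarrow> \<psi> x \<le> M" unfolding M_def using fin by auto
  have Mpos: "0 < M"
  proof (rule ccontr)
    assume "\<not> 0 < M"
    then have "\<And>x. x \<in> S i \<Longrightarrow> \<psi> x = 0" using leM \<psi>nn by force
    then have "D = 0" unfolding D_def by simp
    then show False using Dpos by simp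
  qed
  have MD: "M powr \<alpha> \<le> D"
  proof -
    have "\<psi> x0 powr \<alpha> \<le> (\<Sum>y\<in>S i. \<psi> y powr \<alpha>)"
      using x0(1) fin by (intro member_le_sum) auto
    then show ?thesis using x0(2) by (simp add: D_def)
  qed
  have MaMpos: "0 < M powr \<alpha>" using Mpos by simp
  define f where "f x = (M - \<psi> x) * p i x" for x
  have diff: "M - (\<Sum>x\<in>S i. \<psi> x * p i x) = (\<Sum>x\<in>S i. f x)"
  proof -
    have "(\<Sum>x\<in>S i. f x) = M * (\<Sum>x\<in>S i. p i x) - (\<Sum>x\<in>S i. \<psi> x * p i x)"
      unfolding f_def by (simp add: algebra_simps sum_subtractf sum_distrib_left)
    then show ?thesis using psum by simp
  qed
  have fnn: "\<And>x. x \<in> S i \<Longrightarrow> 0 \<le> f x" unfolding f_def using leM pnn i by simp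
  have alpha0: "0 < \<alpha>" using alpha by simp
  have fb: "f x < M * (1 / (exp 1 * \<alpha>))" if x: "x \<in> S i" for x
  proof -
    have px: "p i x \<le> \<psi> x powr \<alpha> / M powr \<alpha>"
    proof -
      have "p i x = \<psi> x powr \<alpha> / D" using peq[OF x] by (simp add: D_def)
      also have "\<dots> \<le> \<psi> x powr \<alpha> / M powr \<alpha>"
        using MD MaMpos Dpos by (intro divide_left_mono) (auto intro: mult_pos_pos)
      finally show ?thesis .
    qed
    have "f x \<le> (M - \<psi> x) * (\<psi> x powr \<alpha> / M powr \<alpha>)"
      unfolding f_def using px leM[OF x] by (intro mult_left_mono) auto
    also have "\<dots> = M * ((1 - \<psi> x / M) * (\<psi> x / M) powr \<alpha>)"
      using Mpos \<psi>nn[OF x] by (simp add: powr_divide field_simps)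
    also have "\<dots> < M * (1 / (exp 1 * \<alpha>))"
      using key[of "\<psi> x / M" \<alpha>] Mpos \<psi>nn[OF x] leM[OF x] alpha0
      by (intro mult_strict_left_mono) auto
    finally show ?thesis .
  qed
  have fx0: "f x0 = 0" unfolding f_def using x0 by simp
  have cardS: "card (S i) \<ge> 2" using two i by simp
  have ne2: "S i - {x0} \<noteq> {}"
  proof
    assume "S i - {x0} = {}" then have "S i \<subseteq> {x0}" by auto
    then have "card (S i) \<le> 1" using card_mono[of "{x0}"] by fastforce
    then show False using cardS by simp
  qed
  have "(\<Sum>x\<in>S i. f x) = f x0 + (\<Sum>x\<in>S i - {x0}. f x)"
    using fin x0 by (simp add: sum.remove)
  also have "\<dots> = (\<Sum>x\<in>S i - {x0}. f x)" using fx0 by simp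
  also have "\<dots> < (\<Sum>x\<in>S i - {x0}. M * (1 / (exp 1 * \<alpha>)))"
    using fin ne2 fb by (intro sum_strict_mono) auto
  also have "\<dots> = (real (card (S i)) - 1) * (M * (1 / (exp 1 * \<alpha>)))"
    using fin x0 cardS by (simp add: of_nat_diff)
  also have "\<dots> = (real (card (S i)) - 1) / exp 1 * M * (1 / \<alpha>)" by simp
  finally have ub: "(\<Sum>x\<in>S i. f x) < (real (card (S i)) - 1) / exp 1 * M * (1 / \<alpha>)" .
  have lb: "0 \<le> (\<Sum>x\<in>S i. f x)" using fnn by (simp add: sum_nonneg)
  show "0 \<le> (MAX xi\<in>S i. payoff_vs n S u p i xi) - (\<Sum>xi\<in>S i. payoff_vs n S u p i xi * p i xi) \<and>
    (MAX xi\<in>S i. payoff_vs n S u p i xi) - (\<Sum>xi\<in>S i. payoff_vs n S u p i xi * p i xi)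
    < (real (card (S i)) - 1) / exp 1 * (MAX xi\<in>S i. payoff_vs n S u p i xi) * (1 / \<alpha>)"
    using ub lb diff unfolding M_def \<psi>_def by simp
qed

end
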